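(* If the number $\log\Gamma(y) + \log\Gamma(1-y)$ is algebraic for some rational number $y$ with $0<y<1$, then the number $\pi \cdot e$ is transcendental.
   Context: $\Gamma$ is Euler's gamma function, $\Gamma(x) = \int_0^\infty e^{-t} t^{x-1}\,dt$ for $x>0$; $\log$ is the natural logarithm and $e$ is Euler's number. A real number is transcendental if it is not algebraic over $\mathbb{Q}$. *)

theory Defs
  imports "HOL-Analysis.Analysis" "HOL-Computational_Algebra.Polynomial"
begin

end

theory Submission
  imports Defs "HOL-Computational_Algebra.Formal_Power_Series"
    "HOL-Computational_Algebra.Fundamental_Theorem_Algebra"
    "HOL-Library.Poly_Mapping" "HOL-Computational_Algebra.Primes"
begin

fun esym :: "nat \<Rightarrow> 'a::comm_ring_1 list \<Rightarrow> 'a" where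
  "esym 0 xs = 1"
| "esym (Suc m) [] = 0"
| "esym (Suc m) (x # xs) = esym (Suc m) xs + x * esym m xs"

definition psum :: "nat \<Rightarrow> 'a::comm_ring_1 list \<Rightarrow> 'a" where
  "psum i xs = (\<Sum>x\<leftarrow>xs. x ^ i)"

definition Efps :: "'a::comm_ring_1 list \<Rightarrow> 'a fps" where
  "Efps xs = (\<Prod>x\<leftarrow>xs. 1 + fps_const x * fps_X)"

definition Pfps :: "'a::comm_ring_1 list \<Rightarrow> 'a fps" where
  "Pfps xs = Abs_fps (\<lambda>i. (-1)^i * psum (Suc i) xs)"

lemma Efps_nth: "fps_nth (Efps xs) k = esym k xs"
proof (induction xs arbitrary: k)
  case Nil
  then show ?case by (cases k) (auto simp: Efps_def)
next
  case (Cons x xs)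
  have "Efps (x # xs) = Efps xs + fps_X * (fps_const x * Efps xs)"
    by (simp add: Efps_def algebra_simps)
  then show ?case
    using Cons by (cases k) (auto simp: algebra_simps)
qed

lemma Pfps_Cons: "Pfps (x # xs) = Pfps xs + Abs_fps (\<lambda>i. (-1)^i * x^(Suc i))"
  by (rule fps_ext) (simp add: Pfps_def psum_def algebra_simps)

lemma Q_aux: "(1 + fps_const x * fps_X) * Abs_fps (\<lambda>i. (-1)^i * x^(Suc i)) = fps_const (x::'a::comm_ring_1)"
proof (rule fps_ext)
  fix n
  have "(1 + fps_const x * fps_X) * Abs_fps (\<lambda>i. (-1)^i * x^(Suc i)) =
        Abs_fps (\<lambda>i. (-1)^i * x^(Suc i)) + fps_X * (fps_const x * Abs_fps (\<lambda>i. (-1)^i * x^(Suc i)))"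
    by (simp add: algebra_simps)
  then show "fps_nth ((1 + fps_const x * fps_X) * Abs_fps (\<lambda>i. (-1)^i * x^(Suc i))) n = fps_nth (fps_const x) n"
    by (cases n) (auto simp: algebra_simps)
qed

lemma Efps_deriv: "fps_deriv (Efps xs) = Efps xs * Pfps xs"
proof (induction xs)
  case Nil
  have "Pfps [] = (0::'a fps)" by (rule fps_ext) (simp add: Pfps_def psum_def)
  then show ?case by (simp add: Efps_def)
next
  case (Cons x xs)
  have E: "Efps (x # xs) = (1 + fps_const x * fps_X) * Efps xs" by (simp add: Efps_def)
  have "fps_deriv (Efps (x # xs)) = (1 + fps_const x * fps_X) * (Efps xs * Pfps xs) + fps_const x * Efps xs"
    unfolding E by (simp add: Cons algebra_simps)
  also have "\<dots> = Efps (x # xs) * Pfps (x # xs)"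
  proof -
    define Q where "Q = Abs_fps (\<lambda>i. (-1)^i * x^(Suc i))"
    have q: "(1 + fps_const x * fps_X) * Q = fps_const x" using Q_aux[of x] by (simp add: Q_def)
    have "Efps (x # xs) * Pfps (x # xs) = (1 + fps_const x * fps_X) * (Efps xs * Pfps xs) + Efps xs * ((1 + fps_const x * fps_X) * Q)"
      unfolding E Pfps_Cons Q_def[symmetric] by (simp add: algebra_simps)
    also have "\<dots> = (1 + fps_const x * fps_X) * (Efps xs * Pfps xs) + Efps xs * fps_const x"
      by (simp only: q)
    finally show ?thesis by (simp add: algebra_simps)
  qed
  finally show ?case .
qed

lemma newton:
  "of_nat (Suc m) * esym (Suc m) xs = (\<Sum>i=0..m. esym i xs * ((-1)^(m-i) * psum (Suc (m-i)) xs))"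
proof -
  have "fps_nth (fps_deriv (Efps xs)) m = fps_nth (Efps xs * Pfps xs) m" by (simp add: Efps_deriv)
  then show ?thesis by (simp add: fps_mult_nth Efps_nth Pfps_def)
qed

definition subring_like :: "'a::comm_ring_1 set \<Rightarrow> bool" where
  "subring_like S \<longleftrightarrow> 1 \<in> S \<and> (\<forall>x\<in>S. \<forall>y\<in>S. x + y \<in> S \<and> x - y \<in> S \<and> x * y \<in> S)"

context
  fixes S :: "'a::comm_ring_1 set"
  assumes S: "subring_like S"
begin

lemma S_1: "1 \<in> S" using S by (simp add: subring_like_def)
lemma S_add: "x \<in> S \<Longrightarrow> y \<in> S \<Longrightarrow> x + y \<in> S" using S by (simp add: subring_like_def)
lemma S_diff: "x \<in> S \<Longrightarrow> y \<in> S \<Longrightarrow> x - y \<in> S" using S by (simp add: subring_like_def)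
lemma S_mult: "x \<in> S \<Longrightarrow> y \<in> S \<Longrightarrow> x * y \<in> S" using S by (simp add: subring_like_def)
lemma S_0: "0 \<in> S" using S_diff[OF S_1 S_1] by simp
lemma S_uminus: "x \<in> S \<Longrightarrow> - x \<in> S" using S_diff[OF S_0, of x] by simp
lemma S_of_nat: "of_nat n \<in> S"
  by (induction n) (auto intro: S_0 S_add S_1)
lemma S_of_int: "of_int n \<in> S"
proof -
  obtain a b where "n = int a - int b" using int_diff_cases by blast
  then show ?thesis by (simp add: S_diff S_of_nat)
qed
lemma S_power: "x \<in> S \<Longrightarrow> x ^ n \<in> S"
  by (induction n) (auto intro: S_1 S_mult)
lemma S_sum: "(\<And>i. i \<in> A \<Longrightarrow> f i \<in> S) \<Longrightarrow> sum f A \<in> S"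
  by (induction A rule: infinite_finite_induct) (auto intro: S_0 S_add)
lemma S_sum_list: "(\<And>x. x \<in> set xs \<Longrightarrow> f x \<in> S) \<Longrightarrow> (\<Sum>x\<leftarrow>xs. f x) \<in> S"
  by (induction xs) (auto intro: S_0 S_add)
lemma S_minus_one_power: "(-1) ^ n \<in> S"
  by (intro S_power S_uminus S_1)

lemma newton_forward:
  assumes "\<And>k. esym k xs \<in> S"
  shows "psum m xs \<in> S"
proof (induction m rule: less_induct)
  case (less m)
  show ?case
  proof (cases m)
    case 0
    then show ?thesis by (simp add: psum_def sum_list_triv S_of_nat)
  next
    case (Suc n)
    have N: "of_nat (Suc n) * esym (Suc n) xs =
      esym 0 xs * ((-1)^(n-0) * psum (Suc (n-0)) xs) +
      (\<Sum>i=Suc 0..n. esym i xs * ((-1)^(n-i) * psum (Suc (n-i)) xs))"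
      using newton[of n xs] by (simp add: sum.atLeast_Suc_atMost)
    have R: "(\<Sum>i=Suc 0..n. esym i xs * ((-1)^(n-i) * psum (Suc (n-i)) xs)) \<in> S"
      using Suc by (intro S_sum S_mult assms S_minus_one_power less) auto
    have "(-1)^n * psum (Suc n) xs \<in> S"
      using N R S_diff[OF S_mult[OF S_of_nat assms] R, of "Suc n" "Suc n"] by (simp add: algebra_simps)
    then have "(-1)^n * ((-1)^n * psum (Suc n) xs) \<in> S"
      by (rule S_mult[OF S_minus_one_power])
    moreover have "(-1)^n * ((-1)^n * psum (Suc n) xs) = psum (Suc n) xs"
      by (simp add: mult.assoc[symmetric] power_mult_distrib[symmetric])
    ultimately show ?thesis using Suc by simp
  qed
qed

lemma newton_backward:
  assumes "\<And>i. i \<ge> 1 \<Longrightarrow> psum i xs \<in> S"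
  shows "of_nat (fact m) * esym m xs \<in> S"
proof (induction m rule: less_induct)
  case (less m)
  show ?case
  proof (cases m)
    case 0
    then show ?thesis by (simp add: S_1)
  next
    case (Suc n)
    have "of_nat (fact m) * esym m xs = of_nat (fact n) * (of_nat (Suc n) * esym (Suc n) xs)"
      using Suc by (simp add: algebra_simps)
    also have "\<dots> = (\<Sum>i=0..n. (of_nat (fact n div fact i) * (of_nat (fact i) * esym i xs)) *
                      ((-1)^(n-i) * psum (Suc (n-i)) xs))"
      unfolding newton sum_distrib_left
    proof (rule sum.cong)
      fix i assume "i \<in> {0..n}"
      then have "fact i dvd (fact n :: nat)" by (intro fact_dvd) auto
      then have "(of_nat (fact n) :: 'a) = of_nat (fact n div fact i) * of_nat (fact i)"
        by (metis dvd_mult_div_cancel mult.commute of_nat_mult)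
      then show "of_nat (fact n) * (esym i xs * ((-1)^(n-i) * psum (Suc (n-i)) xs)) =
          of_nat (fact n div fact i) * (of_nat (fact i) * esym i xs) * ((-1)^(n-i) * psum (Suc (n-i)) xs)"
        by (simp add: algebra_simps)
    qed simp
    also have "\<dots> \<in> S"
      using Suc by (intro S_sum S_mult S_of_nat less S_minus_one_power assms) auto
    finally show ?thesis .
  qed
qed

end

lemma esym_gt: "k > length xs \<Longrightarrow> esym k xs = 0"
proof (induction xs arbitrary: k)
  case Nil then show ?case by (cases k) auto
next
  case (Cons x xs) then show ?case by (cases k) auto
qed

lemma esym_length: "esym (length xs) xs = prod_list xs"
  by (induction xs) (auto simp: esym_gt)

lemma esym_scale: "esym k (map ((*) c) xs) = c ^ k * esym k xs"
proof (induction xs arbitrary: k)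
  case Nil then show ?case by (cases k) auto
next
  case (Cons x xs) then show ?case by (cases k) (auto simp: algebra_simps)
qed

lemma coeff_prod_linear:
  "coeff (\<Prod>x\<leftarrow>xs. [:-x, 1:]) k =
     (if k \<le> length xs then (-1)^(length xs - k) * esym (length xs - k) xs else 0)"
proof (induction xs arbitrary: k)
  case Nil
  then show ?case by (cases k) auto
next
  case (Cons x xs)
  define P where "P = (\<Prod>x\<leftarrow>xs. [:-x, 1:])"
  define n where "n = length xs"
  have eq: "(\<Prod>x\<leftarrow>x#xs. [:-x, 1:]) = smult (-x) P + pCons 0 P"
    by (simp add: P_def)
  have c: "coeff (\<Prod>x\<leftarrow>x#xs. [:-x, 1:]) k = - x * coeff P k + (if k = 0 then 0 else coeff P (k - 1))"
    unfolding eq by (simp add: coeff_pCons split: nat.splits)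
  have IH: "coeff P j = (if j \<le> n then (-1)^(n - j) * esym (n - j) xs else 0)" for j
    using Cons by (simp add: P_def n_def)
  show ?case
  proof (cases "k = 0")
    case True
    then show ?thesis unfolding c IH using esym_gt[where k="Suc n" and xs=xs]
      by (simp add: n_def algebra_simps)
  next
    case False
    then obtain j where j: "k = Suc j" by (cases k) auto
    consider "j < n" | "j = n" | "j > n" by linarith
    then show ?thesis
    proof cases
      case 1
      then have "n - j = Suc (n - k)" using j by simp
      then show ?thesis unfolding c IH using 1 j by (simp add: n_def algebra_simps)
    next
      case 2
      then show ?thesis unfolding c IH using j by (simp add: n_def)
    next
      case 3
      then show ?thesis unfolding c IH using j by (simp add: n_def)
    qed
  qed
qed

lemma subring_like_Rats: "subring_like (\<rat> :: 'a::field_char_0 set)"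
  by (auto simp: subring_like_def)

lemma subring_like_Ints: "subring_like (\<int> :: 'a::comm_ring_1 set)"
  by (auto simp: subring_like_def)

lemma factor_list:
  fixes p :: "complex poly"
  shows "\<exists>xs. p = smult (lead_coeff p) (\<Prod>x\<leftarrow>xs. [:-x,1:]) \<and> length xs = degree p"
proof -
  obtain xs where xs: "mset xs = proots p" using ex_mset by blast
  have "p = smult (lead_coeff p) (\<Prod>x\<in>#proots p. [:-x, 1:])"
    by (rule complex_poly_decompose_multiset [symmetric])
  also have "(\<Prod>x\<in>#proots p. [:-x, 1:]) = (\<Prod>x\<leftarrow>xs. [:-x, 1:])"
    by (subst prod_mset_prod_list [symmetric]) (simp add: xs)
  finally have eq: "p = smult (lead_coeff p) (\<Prod>x\<leftarrow>xs. [:-x, 1:])" .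
  have "length xs = degree p"
    using xs size_proots_complex[of p] by (metis size_mset)
  with eq show ?thesis by blast
qed

lemma poly_prod_linear: "poly (\<Prod>x\<leftarrow>xs. [:-x,1:]) (z::'a::comm_ring_1) = (\<Prod>x\<leftarrow>xs. z - x)"
  by (induction xs) (simp_all add: algebra_simps)

lemma algebraic_roots_list:
  fixes x :: complex
  assumes "algebraic x"
  obtains xs where "x \<in> set xs" "\<And>m. psum m xs \<in> \<rat>"
proof -
  from assms obtain p where p: "\<And>i. coeff p i \<in> \<int>" "p \<noteq> 0" "poly p x = 0"
    by (erule algebraicE)
  obtain xs where xs: "p = smult (lead_coeff p) (\<Prod>x\<leftarrow>xs. [:-x,1:])" "length xs = degree p"
    using factor_list by blast
  define c where "c = lead_coeff p"
  have c0: "c \<noteq> 0" using p by (simp add: c_def)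
  have "poly p x = c * (\<Prod>y\<leftarrow>xs. x - y)"
    by (subst xs(1)) (simp add: poly_prod_linear c_def)
  then have "x \<in> set xs" using p c0 by (auto simp: prod_list_zero_iff)
  moreover have "esym k xs \<in> \<rat>" for k
  proof (cases "k \<le> length xs")
    case True
    have "coeff p (length xs - k) = c * ((-1)^k * esym k xs)"
      by (subst xs(1)) (simp add: coeff_prod_linear True c_def)
    then have "esym k xs = (-1)^k * coeff p (length xs - k) / c"
      using c0 by (simp add: field_simps)
    moreover have "coeff p (length xs - k) \<in> \<rat>" "c \<in> \<rat>"
      using p(1) unfolding c_def by (auto intro: Ints_subset_Rats[THEN subsetD])
    ultimately show ?thesis by (simp add: Rats_divide Rats_mult)
  next
    case False
    then show ?thesis by (simp add: esym_gt)
  qed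
  then have "\<And>m. psum m xs \<in> \<rat>"
    by (intro newton_forward[OF subring_like_Rats])
  ultimately show ?thesis by (rule that)
qed

lemma algebraic_of_list:
  fixes zs :: "complex list"
  assumes "\<And>m. m \<ge> 1 \<Longrightarrow> psum m zs \<in> \<rat>" "z \<in> set zs"
  shows "algebraic z"
proof -
  have e: "esym k zs \<in> \<rat>" for k
  proof -
    have "of_nat (fact k) * esym k zs \<in> \<rat>"
      by (intro newton_backward[OF subring_like_Rats] assms)
    moreover have "(of_nat (fact k) :: complex) \<in> \<rat>" by (rule Rats_of_nat)
    ultimately have "(of_nat (fact k) * esym k zs) / of_nat (fact k) \<in> \<rat>"
      by (intro Rats_divide)
    then show ?thesis by simp
  qed
  define Q where "Q = (\<Prod>x\<leftarrow>zs. [:-x,1:])"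
  have "\<forall>i. coeff Q i \<in> \<rat>"
    unfolding Q_def coeff_prod_linear using e by (auto intro!: Rats_mult)
  moreover have "Q \<noteq> 0" unfolding Q_def by (auto simp: prod_list_zero_iff)
  moreover have "poly Q z = 0" unfolding Q_def poly_prod_linear using assms(2)
    by (auto simp: prod_list_zero_iff)
  ultimately show ?thesis unfolding algebraic_altdef by blast
qed

lemma psum_concat: "psum m (concat (map (\<lambda>a. map (f a) ys) xs)) = (\<Sum>a\<leftarrow>xs. \<Sum>b\<leftarrow>ys. (f a b) ^ m)"
  by (induction xs) (auto simp: psum_def o_def)

lemma sum_list_sum_swap: "(\<Sum>x\<leftarrow>xs. \<Sum>k\<in>A. f x k) = (\<Sum>k\<in>A. \<Sum>x\<leftarrow>xs. f x k)"
  by (induction xs) (simp_all add: sum.distrib)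

lemma sum_list_rats: "(\<And>x. x \<in> set xs \<Longrightarrow> f x \<in> \<rat>) \<Longrightarrow> (\<Sum>x\<leftarrow>xs. f x) \<in> \<rat>"
  by (induction xs) auto

lemma algebraic_add_complex:
  fixes x y :: complex
  assumes "algebraic x" "algebraic y"
  shows "algebraic (x + y)"
proof -
  obtain xs where xs: "x \<in> set xs" "\<And>m. psum m xs \<in> \<rat>" using algebraic_roots_list[OF assms(1)] by blast
  obtain ys where ys: "y \<in> set ys" "\<And>m. psum m ys \<in> \<rat>" using algebraic_roots_list[OF assms(2)] by blast
  define zs where "zs = concat (map (\<lambda>a. map (\<lambda>b. a + b) ys) xs)"
  have "psum m zs \<in> \<rat>" for m
  proof -
    have "psum m zs = (\<Sum>a\<leftarrow>xs. \<Sum>b\<leftarrow>ys. \<Sum>k\<le>m. of_nat (m choose k) * a ^ k * b ^ (m - k))"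
      unfolding zs_def psum_concat by (simp add: binomial_ring)
    also have "\<dots> = (\<Sum>k\<le>m. of_nat (m choose k) * psum k xs * psum (m - k) ys)"
      by (simp add: psum_def sum_list_sum_swap sum_list_const_mult sum_list_mult_const mult.assoc)
    also have "\<dots> \<in> \<rat>" using xs ys by (intro Rats_sum Rats_mult) auto
    finally show ?thesis .
  qed
  moreover have "x + y \<in> set zs" using xs ys by (auto simp: zs_def)
  ultimately show ?thesis by (intro algebraic_of_list) auto
qed

lemma algebraic_mult_complex:
  fixes x y :: complex
  assumes "algebraic x" "algebraic y"
  shows "algebraic (x * y)"
proof -
  obtain xs where xs: "x \<in> set xs" "\<And>m. psum m xs \<in> \<rat>" using algebraic_roots_list[OF assms(1)] by blast
  obtain ys where ys: "y \<in> set ys" "\<And>m. psum m ys \<in> \<rat>" using algebraic_roots_list[OF assms(2)] by blast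
  define zs where "zs = concat (map (\<lambda>a. map (\<lambda>b. a * b) ys) xs)"
  have "psum m zs \<in> \<rat>" for m
  proof -
    have "psum m zs = psum m xs * psum m ys"
      unfolding zs_def psum_concat
      by (simp add: psum_def power_mult_distrib sum_list_const_mult sum_list_mult_const)
    also have "\<dots> \<in> \<rat>" using xs ys by (intro Rats_mult) auto
    finally show ?thesis .
  qed
  moreover have "x * y \<in> set zs" using xs ys by (auto simp: zs_def)
  ultimately show ?thesis by (intro algebraic_of_list) auto
qed

lemma algebraic_add_real:
  fixes x y :: real
  assumes "algebraic x" "algebraic y"
  shows "algebraic (x + y)"
  using algebraic_add_complex[of "of_real x" "of_real y"] assms by (simp flip: of_real_add)

lemma algebraic_mult_real:
  fixes x y :: real
  assumes "algebraic x" "algebraic y"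
  shows "algebraic (x * y)"
  using algebraic_mult_complex[of "of_real x" "of_real y"] assms by (simp flip: of_real_mult)

type_synonym gr = "complex \<Rightarrow>\<^sub>0 int"

definition lin :: "(complex \<Rightarrow> complex) \<Rightarrow> gr \<Rightarrow> complex" where
  "lin \<phi> c = (\<Sum>v\<in>Poly_Mapping.keys c. of_int (Poly_Mapping.lookup c v) * \<phi> v)"

lemma lin_superset:
  assumes "finite A" "Poly_Mapping.keys c \<subseteq> A"
  shows "lin \<phi> c = (\<Sum>v\<in>A. of_int (Poly_Mapping.lookup c v) * \<phi> v)"
  unfolding lin_def using assms
  by (intro sum.mono_neutral_left) (auto simp: in_keys_iff)

lemma lin_zero [simp]: "lin \<phi> 0 = 0"
  by (simp add: lin_def)

lemma lin_single [simp]: "lin \<phi> (Poly_Mapping.single v k) = of_int k * \<phi> v"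
  by (cases "k = 0") (simp_all add: lin_def)

lemma lin_add: "lin \<phi> (a + b) = lin \<phi> a + lin \<phi> b"
proof -
  let ?A = "Poly_Mapping.keys a \<union> Poly_Mapping.keys b"
  have "lin \<phi> (a + b) = (\<Sum>v\<in>?A. of_int (Poly_Mapping.lookup (a + b) v) * \<phi> v)"
    by (rule lin_superset) (auto simp: keys_add)
  also have "\<dots> = (\<Sum>v\<in>?A. of_int (Poly_Mapping.lookup a v) * \<phi> v) + (\<Sum>v\<in>?A. of_int (Poly_Mapping.lookup b v) * \<phi> v)"
    by (simp add: lookup_add sum.distrib algebra_simps)
  also have "\<dots> = lin \<phi> a + lin \<phi> b"
    by (subst (1 2) lin_superset[symmetric]) auto
  finally show ?thesis .
qed

lemma lin_uminus: "lin \<phi> (- a) = - lin \<phi> a"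
  by (simp add: lin_def sum_negf)

lemma lin_diff: "lin \<phi> (a - b) = lin \<phi> a - lin \<phi> b"
  using lin_add[of \<phi> a "-b"] by (simp add: lin_uminus)

lemma lin_cong: "(\<And>v. v \<in> Poly_Mapping.keys c \<Longrightarrow> \<phi> v = \<psi> v) \<Longrightarrow> lin \<phi> c = lin \<psi> c"
  by (simp add: lin_def)

lemma lin_fun_add: "lin (\<lambda>v. \<phi> v + \<psi> v) c = lin \<phi> c + lin \<psi> c"
  by (simp add: lin_def sum.distrib algebra_simps)

lemma lin_fun_cmult: "lin (\<lambda>v. k * \<phi> v) c = k * lin \<phi> c"
  unfolding lin_def sum_distrib_left by (rule sum.cong) (simp_all add: algebra_simps)

lemma lin_fun_multc: "lin (\<lambda>v. \<phi> v * k) c = lin \<phi> c * k"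
  unfolding lin_def sum_distrib_right by (rule sum.cong) (simp_all add: algebra_simps)

lemma lin_fun_sum: "lin (\<lambda>v. \<Sum>i\<in>I. f i v) c = (\<Sum>i\<in>I. lin (f i) c)"
  by (simp add: lin_def sum_distrib_left sum.swap[of _ I])

lemma lin_sum: "lin \<phi> (\<Sum>i\<in>I. f i) = (\<Sum>i\<in>I. lin \<phi> (f i))"
  by (induction I rule: infinite_finite_induct) (simp_all add: lin_add)

lemma lin_sum_list: "lin \<phi> (\<Sum>x\<leftarrow>xs. f x) = (\<Sum>x\<leftarrow>xs. lin \<phi> (f x))"
  by (induction xs) (simp_all add: lin_add)

lemma lin_one [simp]: "lin \<phi> 1 = \<phi> 0"
  by (simp flip: single_one)

lemma lin_of_int [simp]: "lin \<phi> (of_int k) = of_int k * \<phi> 0"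
  by (simp flip: single_of_int)

lemma lin_of_nat [simp]: "lin \<phi> (of_nat k) = of_nat k * \<phi> 0"
  by (simp flip: single_of_nat)

lemma lin_indicator: "lin (\<lambda>v. if v = w then 1 else 0) c = of_int (Poly_Mapping.lookup c w)"
  by (cases "w \<in> Poly_Mapping.keys c") (auto simp: lin_def if_distrib in_keys_iff cong: if_cong)

lemma lin_mult_single: "lin \<phi> (frag_of u * b) = lin (\<lambda>v. \<phi> (u + v)) b"
proof -
  have "Poly_Mapping.keys b \<subseteq> UNIV" by simp
  then show ?thesis
  proof (induction b rule: frag_induction)
    case zero then show ?case by simp
  next
    case (one x) then show ?case by (simp add: mult_single)
  next
    case (diff a b) then show ?case by (simp add: right_diff_distrib lin_diff)
  qed
qed

lemma lin_mult: "lin \<phi> (a * b) = lin (\<lambda>u. lin (\<lambda>v. \<phi> (u + v)) b) a"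
proof -
  have "Poly_Mapping.keys a \<subseteq> UNIV" by simp
  then show ?thesis
  proof (induction a rule: frag_induction)
    case zero then show ?case by simp
  next
    case (one x) then show ?case by (simp add: lin_mult_single)
  next
    case (diff a1 a2) then show ?case by (simp add: left_diff_distrib lin_diff)
  qed
qed

lemma lin_mult_hom:
  assumes "\<And>u v. ch (u + v) = ch u * ch v"
  shows "lin ch (a * b) = lin ch a * lin ch b"
  by (simp add: lin_mult assms lin_fun_cmult lin_fun_multc)

lemma lin_power_hom:
  assumes "\<And>u v. ch (u + v) = ch u * ch v" "ch 0 = 1"
  shows "lin ch (a ^ n) = lin ch a ^ n"
  by (induction n) (simp_all add: lin_mult_hom assms)

lemma frag_of_power: "frag_of u ^ n = frag_of (of_nat n * u)"
  by (induction n) (simp_all add: mult_single algebra_simps)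

definition refl :: "gr \<Rightarrow> gr" where
  "refl c = frag_extend (\<lambda>v. frag_of (- v)) c"

lemma refl_diff: "refl (a - b) = refl a - refl b"
  by (simp add: refl_def frag_extend_diff)

lemma lin_refl: "lin \<phi> (refl c) = lin (\<lambda>v. \<phi> (- v)) c"
proof -
  have "Poly_Mapping.keys c \<subseteq> UNIV" by simp
  then show ?thesis
  proof (induction c rule: frag_induction)
    case zero then show ?case by (simp add: refl_def)
  next
    case (one x) then show ?case by (simp add: refl_def)
  next
    case (diff a b) then show ?case by (simp add: refl_diff lin_diff)
  qed
qed

lemma keys_refl: "Poly_Mapping.keys (refl c) \<subseteq> uminus ` Poly_Mapping.keys c"
  unfolding refl_def using keys_frag_extend[of "\<lambda>v. frag_of (- v)" c] by auto

lemma map_poly_of_int_mult: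
  "map_poly (of_int :: int \<Rightarrow> 'a::comm_ring_1) (p * q) = map_poly of_int p * map_poly of_int q"
  by (rule poly_eqI) (simp add: coeff_map_poly coeff_mult of_int_sum)

lemma map_poly_of_int_power:
  "map_poly (of_int :: int \<Rightarrow> 'a::comm_ring_1) (p ^ n) = map_poly of_int p ^ n"
  by (induction n) (simp_all add: map_poly_of_int_mult)

definition ipoly :: "int poly \<Rightarrow> 'a::comm_ring_1 \<Rightarrow> 'a" where
  "ipoly p z = (\<Sum>i\<le>degree p. of_int (coeff p i) * z ^ i)"

lemma poly_sum_bound:
  assumes "degree p \<le> N"
  shows "poly p x = (\<Sum>i\<le>N. coeff p i * (x::'a::comm_ring_1) ^ i)"
  unfolding poly_altdef using assms
  by (intro sum.mono_neutral_left) (auto simp: coeff_eq_0)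

lemma ipoly_poly: "ipoly p z = poly (map_poly of_int p) (z :: 'a::comm_ring_1)"
proof -
  have "degree (map_poly (of_int :: int \<Rightarrow> 'a) p) \<le> degree p" by (rule map_poly_degree_leq)
  then show ?thesis unfolding ipoly_def by (subst poly_sum_bound) (auto simp: coeff_map_poly)
qed

lemma ipoly_power: "ipoly p z ^ n = ipoly (p ^ n) (z :: 'a::comm_ring_1)"
  by (simp add: ipoly_poly map_poly_of_int_power poly_power)

lemma lin_ipoly:
  assumes "\<And>u v. ch (u + v) = ch u * ch v" "ch 0 = 1"
  shows "lin ch (ipoly p x) = ipoly p (lin ch x)"
  unfolding ipoly_def lin_sum
  by (intro sum.cong refl) (simp add: lin_mult_hom assms lin_power_hom of_int_poly lin_fun_cmult
      flip: single_of_int)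

lemma ipoly_frag: "ipoly p (frag_of a) = (\<Sum>i\<le>degree p. of_int (coeff p i) * frag_of (of_nat i * a))"
  by (simp add: ipoly_def frag_of_power)

definition IntP :: "int \<Rightarrow> gr \<Rightarrow> bool" where
  "IntP d c \<longleftrightarrow> (\<forall>e. lin (\<lambda>v. (of_int d * v) ^ e) c \<in> \<int>)"

lemma IntP_subring: "subring_like {c. IntP d c}"
  unfolding subring_like_def
proof safe
  show "IntP d 1" by (auto simp: IntP_def power_0_left)
next
  fix x y assume x: "IntP d x" and y: "IntP d y"
  show "IntP d (x + y)" using x y by (auto simp: IntP_def lin_add)
  show "IntP d (x - y)" using x y by (auto simp: IntP_def lin_diff)
  show "IntP d (x * y)" unfolding IntP_def
  proof
    fix e
    have "lin (\<lambda>v. (of_int d * v) ^ e) (x * y) =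
      lin (\<lambda>u. \<Sum>k\<le>e. of_nat (e choose k) * (of_int d * u) ^ k * lin (\<lambda>v. (of_int d * v) ^ (e - k)) y) x"
      unfolding lin_mult
      by (intro lin_cong) (simp add: distrib_left binomial_ring lin_fun_sum lin_fun_cmult mult.assoc)
    also have "\<dots> = (\<Sum>k\<le>e. of_nat (e choose k) * lin (\<lambda>v. (of_int d * v) ^ (e - k)) y * lin (\<lambda>u. (of_int d * u) ^ k) x)"
      by (simp add: lin_fun_sum lin_fun_cmult lin_fun_multc mult.commute mult.left_commute)
    also have "\<dots> \<in> \<int>" using x y unfolding IntP_def by (intro Ints_sum Ints_mult) auto
    finally show "lin (\<lambda>v. (of_int d * v) ^ e) (x * y) \<in> \<int>" .
  qed
qed

lemma exists_good_t:
  fixes A :: "complex set" and P :: "complex poly"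
  assumes "finite A" "0 \<notin> A" "P \<noteq> 0"
  shows "\<exists>t::real. \<forall>a\<in>A. poly P (exp (of_real t * a)) \<noteq> 0"
proof -
  define \<delta> where "\<delta> = 1 / (1 + (\<Sum>a\<in>A. cmod a))"
  have S0: "(\<Sum>a\<in>A. cmod a) \<ge> 0" by (intro sum_nonneg) auto
  have \<delta>0: "\<delta> > 0" using S0 by (simp add: \<delta>_def)
  have \<delta>a: "\<delta> * cmod a < 1" if "a \<in> A" for a
  proof -
    have "cmod a \<le> (\<Sum>a\<in>A. cmod a)" using that assms(1) by (intro member_le_sum) auto
    then show ?thesis using S0 by (simp add: \<delta>_def field_simps)
  qed
  define Bad where "Bad a = (\<lambda>t. exp (of_real t * a)) -` {z. poly P z = 0} \<inter> {0<..<\<delta>}" for a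
  have fin: "finite (Bad a)" if a: "a \<in> A" for a
    unfolding Bad_def
  proof (rule finite_vimage_IntI)
    show "finite {z. poly P z = 0}" using poly_roots_finite[OF assms(3)] .
    show "inj_on (\<lambda>t. exp (complex_of_real t * a)) {0<..<\<delta>}"
    proof (rule inj_onI)
      fix s t assume s: "s \<in> {0<..<\<delta>}" and t: "t \<in> {0<..<\<delta>}"
        and eq: "exp (complex_of_real s * a) = exp (complex_of_real t * a)"
      then obtain n :: int where n: "complex_of_real s * a = complex_of_real t * a + (of_int (2 * n) * pi) * \<i>"
        unfolding exp_eq by blast
      have "cmod (complex_of_real (s - t) * a) = cmod ((of_int (2 * n) * pi) * \<i>)"
        using n by (simp add: algebra_simps)
      also have "\<dots> = 2 * \<bar>of_int n\<bar> * pi" by (simp add: norm_mult)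
      finally have e1: "\<bar>s - t\<bar> * cmod a = 2 * \<bar>of_int n\<bar> * pi"
        by (simp add: norm_mult del: of_real_diff)
      have "\<bar>s - t\<bar> < \<delta>" using s t by auto
      then have "\<bar>s - t\<bar> * cmod a \<le> \<delta> * cmod a" by (intro mult_right_mono) auto
      then have "2 * \<bar>of_int n\<bar> * pi < 1" using e1 \<delta>a[OF a] by linarith
      then have "n = 0"
      proof -
        assume h: "2 * \<bar>of_int n\<bar> * pi < 1"
        show "n = 0"
        proof (rule ccontr)
          assume "n \<noteq> 0"
          then have "\<bar>of_int n\<bar> \<ge> (1::real)" by linarith
          then have "2 * \<bar>of_int n\<bar> * pi \<ge> 2 * 1 * pi" using pi_gt3 by (intro mult_right_mono mult_left_mono) auto
          then show False using h pi_gt3 by linarith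
        qed
      qed
      then have "complex_of_real (s - t) * a = 0" using n by (simp add: algebra_simps)
      then show "s = t" using a assms(2) by auto
    qed
  qed
  have "finite (\<Union>a\<in>A. Bad a)" using fin assms(1) by auto
  moreover have "\<not> finite {0<..<\<delta>}" using \<delta>0 by (rule infinite_Ioo)
  ultimately obtain t where t: "t \<in> {0<..<\<delta>}" "t \<notin> (\<Union>a\<in>A. Bad a)"
    by (metis finite_subset subsetI)
  then show ?thesis by (intro exI[of _ t]) (auto simp: Bad_def)
qed

definition AK :: "gr \<Rightarrow> bool" where
  "AK c \<longleftrightarrow> (\<forall>v\<in>Poly_Mapping.keys c. algebraic v)"

lemma AK_subring: "subring_like {c. AK c}"
  unfolding subring_like_def
proof safe
  show "AK 1" by (simp add: AK_def)
next
  fix x y assume x: "AK x" and y: "AK y"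
  show "AK (x + y)" using x y keys_add[of x y] by (auto simp: AK_def)
  show "AK (x - y)" using x y keys_add[of x "-y"] by (auto simp: AK_def)
  show "AK (x * y)" using x y keys_mult[of x y] by (auto simp: AK_def intro!: algebraic_add_complex)
qed

lemma AK_frag: "algebraic v \<Longrightarrow> AK (frag_of v)"
  by (simp add: AK_def)

lemma lin_fact [simp]: "lin \<phi> (fact k) = fact k * \<phi> 0"
  by (metis lin_of_nat of_nat_fact)

lemma S_prod_list: "subring_like S \<Longrightarrow> (\<And>x. x \<in> set xs \<Longrightarrow> x \<in> S) \<Longrightarrow> prod_list xs \<in> S"
  by (induction xs) (auto intro: S_1 S_mult)

lemma lin_prod_list_hom:
  assumes "\<And>u v. ch (u + v) = ch u * ch v" "ch 0 = 1"
  shows "lin ch (prod_list xs) = (\<Prod>x\<leftarrow>xs. lin ch x)"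
  by (induction xs) (simp_all add: lin_mult_hom assms)

lemma construct_Theta:
  fixes as :: "complex list" and M :: "int poly" and d :: int and \<alpha> :: complex
  assumes M0: "M \<noteq> 0" and \<alpha>: "\<alpha> \<in> set as" and root: "poly (map_poly of_int M) (exp \<alpha>) = (0::complex)"
    and nz: "\<forall>a\<in>set as. a \<noteq> 0" and alg: "\<forall>a\<in>set as. algebraic a"
    and ps: "\<And>e. psum e (map (\<lambda>a. of_int d * a) as) \<in> \<int>"
  shows "\<exists>\<Theta>. lin exp \<Theta> = 0 \<and> Poly_Mapping.lookup \<Theta> 0 \<noteq> 0 \<and> IntP d \<Theta> \<and> AK \<Theta>"
proof -
  define Mx :: "complex \<Rightarrow> gr" where "Mx a = ipoly M (frag_of a)" for a
  define xs where "xs = map Mx as"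
  define n where "n = length as"
  define c where "c = of_nat (fact n) * prod_list xs"
  have exph: "\<And>u v. exp (u + v) = exp u * exp (v::complex)" by (rule exp_add)
  have IS: "IntP d (\<Sum>a\<leftarrow>as. frag_of (of_nat k * a))" for k
  proof -
    have "lin (\<lambda>v. (of_int d * v) ^ e) (\<Sum>a\<leftarrow>as. frag_of (of_nat k * a)) =
          of_nat k ^ e * psum e (map (\<lambda>a. of_int d * a) as)" for e
    proof -
      have h: "(of_int d * (of_nat k * a)) ^ e = of_nat k ^ e * (of_int d * a) ^ e" for a :: complex
        by (simp add: power_mult_distrib)
      show ?thesis by (simp add: lin_sum_list psum_def o_def h sum_list_const_mult)
    qed
    then show ?thesis using ps unfolding IntP_def by (auto intro: Ints_mult)
  qed
  have PS: "IntP d (psum i xs)" for i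
  proof -
    have "psum i xs = (\<Sum>a\<leftarrow>as. ipoly (M ^ i) (frag_of a))"
      by (simp add: psum_def xs_def Mx_def o_def ipoly_power)
    also have "\<dots> = (\<Sum>k\<le>degree (M ^ i). of_int (coeff (M ^ i) k) * (\<Sum>a\<leftarrow>as. frag_of (of_nat k * a)))"
      by (simp add: ipoly_frag sum_list_sum_swap sum_list_const_mult)
    also have "IntP d \<dots>"
      using IntP_subring[of d] IS
      by (intro S_sum[of "{c. IntP d c}", simplified] S_mult[of "{c. IntP d c}", simplified] S_of_int[of "{c. IntP d c}", simplified]) auto
    finally show ?thesis .
  qed
  have Ic: "IntP d c"
  proof -
    have "of_nat (fact n) * esym n xs \<in> {c. IntP d c}"
      by (rule newton_backward[OF IntP_subring]) (use PS in auto)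
    moreover have "esym n xs = prod_list xs" using esym_length[of xs] by (simp add: xs_def n_def)
    ultimately show ?thesis by (simp add: c_def)
  qed
  have lin_Mx: "lin ch (Mx a) = poly (map_poly of_int M) (ch a)"
    if "\<And>u v. ch (u + v) = ch u * ch v" "ch 0 = 1" for ch a
    unfolding Mx_def lin_ipoly[OF that] by (simp add: ipoly_poly that)
  have lin_c: "lin ch c = of_nat (fact n) * (\<Prod>a\<leftarrow>as. poly (map_poly of_int M) (ch a))"
    if "\<And>u v. ch (u + v) = ch u * ch v" "ch 0 = 1" for ch
    using that by (simp add: c_def lin_mult_hom lin_prod_list_hom xs_def o_def lin_Mx)
  have ev0: "lin exp c = 0"
    using lin_c[of exp] \<alpha> root by (simp add: exph prod_list_zero_iff)
  have "map_poly (of_int :: int \<Rightarrow> complex) M \<noteq> 0" using M0 by (simp add: map_poly_eq_0_iff)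
  moreover have "0 \<notin> set as" using nz by auto
  ultimately obtain t :: real where t: "\<forall>a\<in>set as. poly (map_poly of_int M) (exp (of_real t * a)) \<noteq> (0::complex)"
    using exists_good_t[of "set as" "map_poly of_int M"] by auto
  have "lin (\<lambda>v. exp (of_real t * v)) c \<noteq> 0"
    by (subst lin_c) (use t in \<open>auto simp: exp_add distrib_left prod_list_zero_iff\<close>)
  then have c0: "c \<noteq> 0" by auto
  have "AK (Mx a)" if "a \<in> set as" for a
  proof -
    have "algebraic (of_nat k * a)" for k
      using alg that by (intro algebraic_mult_complex) auto
    then show ?thesis unfolding Mx_def ipoly_frag using AK_subring
      by (intro S_sum[of "{c. AK c}", simplified] S_mult[of "{c. AK c}", simplified] S_of_int[of "{c. AK c}", simplified] AK_frag) auto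
  qed
  then have "prod_list (map Mx as) \<in> {c. AK c}"
    by (intro S_prod_list[OF AK_subring]) auto
  then have AKc: "AK c" unfolding c_def xs_def using AK_subring
    by (intro S_mult[of "{c. AK c}", simplified] S_of_nat[of "{c. AK c}", simplified]) auto
  define \<Theta> where "\<Theta> = c * refl c"
  have "lin exp \<Theta> = 0" unfolding \<Theta>_def by (simp add: lin_mult_hom exph ev0)
  moreover have "Poly_Mapping.lookup \<Theta> 0 \<noteq> 0"
  proof -
    have "of_int (Poly_Mapping.lookup \<Theta> 0) = lin (\<lambda>v. if v = 0 then 1 else 0) \<Theta>"
      by (simp add: lin_indicator)
    also have "\<dots> = lin (\<lambda>u. lin (\<lambda>v. if v = u then 1 else 0) c) c"
      unfolding \<Theta>_def lin_mult lin_refl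
      by (intro lin_cong arg_cong2[where f=lin] ext) (auto simp: algebra_simps)
    also have "\<dots> = lin (\<lambda>u. of_int (Poly_Mapping.lookup c u)) c"
      by (simp add: lin_indicator)
    also have "\<dots> = of_int (\<Sum>u\<in>Poly_Mapping.keys c. Poly_Mapping.lookup c u * Poly_Mapping.lookup c u)"
      by (simp add: lin_def)
    finally have eq: "Poly_Mapping.lookup \<Theta> 0 = (\<Sum>u\<in>Poly_Mapping.keys c. Poly_Mapping.lookup c u * Poly_Mapping.lookup c u)"
      by (simp only: of_int_eq_iff)
    have "Poly_Mapping.keys c \<noteq> {}" using c0 by simp
    then have "(\<Sum>u\<in>Poly_Mapping.keys c. Poly_Mapping.lookup c u * Poly_Mapping.lookup c u) > 0"
    proof (intro sum_pos)
      fix u assume "u \<in> Poly_Mapping.keys c"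
      then have "Poly_Mapping.lookup c u \<noteq> 0" by (simp add: in_keys_iff)
      then show "0 < Poly_Mapping.lookup c u * Poly_Mapping.lookup c u"
        by (cases "Poly_Mapping.lookup c u > 0") (auto simp: mult_neg_neg)
    qed auto
    then show ?thesis using eq by simp
  qed
  moreover have "IntP d \<Theta>"
  proof -
    have "IntP d (refl c)" using Ic unfolding IntP_def
    proof (intro allI)
      fix e assume h: "\<forall>e. lin (\<lambda>v. (of_int d * v) ^ e) c \<in> \<int>"
      have "lin (\<lambda>v. (of_int d * v) ^ e) (refl c) = (-1) ^ e * lin (\<lambda>v. (of_int d * v) ^ e) c"
        unfolding lin_refl lin_fun_cmult[symmetric]
        by (intro lin_cong) (simp add: power_mult_distrib[symmetric])
      then show "lin (\<lambda>v. (of_int d * v) ^ e) (refl c) \<in> \<int>" using h by (auto intro: Ints_mult)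
    qed
    then show ?thesis unfolding \<Theta>_def using Ic IntP_subring[of d]
      by (auto simp: subring_like_def)
  qed
  moreover have "AK \<Theta>"
  proof -
    have "AK (refl c)" using AKc keys_refl[of c] by (auto simp: AK_def)
    then show ?thesis unfolding \<Theta>_def using AKc AK_subring by (auto simp: subring_like_def)
  qed
  ultimately show ?thesis by blast
qed

lemma hermite_bound:
  fixes Fq fq :: "complex poly" and R B :: real and v :: complex
  assumes der: "pderiv Fq = Fq - fq"
    and bnd: "\<And>z. cmod z \<le> R \<Longrightarrow> cmod (poly fq z) \<le> B"
    and v: "cmod v \<le> R"
  shows "cmod (exp v * poly Fq 0 - poly Fq v) \<le> exp R * exp R * B * R"
proof -
  define \<Phi> where "\<Phi> z = exp (- z) * poly Fq z" for z
  have R0: "R \<ge> 0" using v norm_ge_zero order_trans by blast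
  have "cmod (poly fq 0) \<le> B" using R0 by (intro bnd) simp
  then have B0: "B \<ge> 0" by (meson norm_ge_zero order_trans)
  have d: "(\<Phi> has_field_derivative (- exp (- z) * poly fq z)) (at z within cball 0 R)" for z
  proof -
    have e: "((\<lambda>z. exp (- z)) has_field_derivative (exp (- z) * (-1))) (at z)"
      by (rule DERIV_chain2[OF DERIV_exp]) (auto intro!: derivative_eq_intros)
    have p: "(poly Fq has_field_derivative poly (pderiv Fq) z) (at z)" by (rule poly_DERIV)
    have "(\<Phi> has_field_derivative (exp (- z) * (-1) * poly Fq z + exp (- z) * poly (pderiv Fq) z)) (at z)"
      unfolding \<Phi>_def using DERIV_mult[OF e p] by (simp add: mult.commute)
    then have "(\<Phi> has_field_derivative (- exp (- z) * poly fq z)) (at z)"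
      by (simp add: der algebra_simps)
    then show ?thesis by (rule has_field_derivative_at_within)
  qed
  have b: "norm (- exp (- z) * poly fq z) \<le> exp R * B" if "z \<in> cball 0 R" for z
  proof -
    have "norm (exp (- z)) \<le> exp R"
    proof -
      have "norm (exp (- z)) = exp (Re (- z))" by (rule norm_exp_eq_Re)
      also have "Re (- z) \<le> cmod z" using abs_Re_le_cmod[of z] by simp
      then have "exp (Re (- z)) \<le> exp R" using that by (simp add: dist_norm)
      finally show ?thesis .
    qed
    moreover have "cmod (poly fq z) \<le> B" using that by (intro bnd) (simp add: dist_norm)
    moreover have "exp R \<ge> 0" by simp
    ultimately show ?thesis unfolding norm_mult norm_minus_cancel by (intro mult_mono) auto
  qed
  have "norm (\<Phi> v - \<Phi> 0) \<le> exp R * B * norm (v - 0)"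
    by (rule field_differentiable_bound[OF convex_cball d b]) (use v R0 in \<open>auto simp: dist_norm\<close>)
  have *: "norm (\<Phi> v - \<Phi> 0) \<le> exp R * B * R"
  proof -
    have "exp R * B * norm (v - 0) \<le> exp R * B * R"
      using v B0 by (intro mult_left_mono) auto
    with \<open>norm (\<Phi> v - \<Phi> 0) \<le> exp R * B * norm (v - 0)\<close> show ?thesis by linarith
  qed
  have ee: "exp v * exp (- v) = 1" by (simp flip: exp_add)
  have "- exp v * (\<Phi> v - \<Phi> 0) = exp v * poly Fq 0 - (exp v * exp (- v)) * poly Fq v"
    unfolding \<Phi>_def by (simp add: algebra_simps)
  then have "exp v * poly Fq 0 - poly Fq v = - exp v * (\<Phi> v - \<Phi> 0)"
    by (simp only: ee mult_1)
  then have "cmod (exp v * poly Fq 0 - poly Fq v) = norm (exp v) * norm (\<Phi> v - \<Phi> 0)"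
    by (simp add: norm_mult)
  also have "\<dots> \<le> exp R * (exp R * B * R)"
  proof (rule mult_mono)
    have "norm (exp v) = exp (Re v)" by (rule norm_exp_eq_Re)
    also have "\<dots> \<le> exp R" using abs_Re_le_cmod[of v] v by simp
    finally show "norm (exp v) \<le> exp R" .
  qed (use * in auto)
  finally show ?thesis by (simp add: mult_ac)
qed

lemma higher_pderiv_pcompose_scale:
  fixes q :: "complex poly"
  shows "(pderiv ^^ j) (pcompose q [:0, a:]) = smult (a ^ j) (pcompose ((pderiv ^^ j) q) [:0, a:])"
proof (induction j)
  case 0 then show ?case by simp
next
  case (Suc j)
  have pd: "pderiv [:0, a:] = [:a:]" by (simp add: pderiv_pCons)
  have "(pderiv ^^ Suc j) (pcompose q [:0, a:]) = pderiv ((pderiv ^^ j) (pcompose q [:0, a:]))" by simp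
  also have "\<dots> = smult (a ^ j) (pcompose (pderiv ((pderiv ^^ j) q)) [:0, a:] * [:a:])"
    unfolding Suc by (simp add: pderiv_smult pderiv_pcompose pd)
  also have "\<dots> = smult (a ^ Suc j) (pcompose ((pderiv ^^ Suc j) q) [:0, a:])"
    by (simp add: mult.commute)
  finally show ?case .
qed

lemma pderiv_dvd_aux:
  fixes r :: "complex poly"
  assumes "[:-u,1:] ^ Suc m dvd r"
  shows "[:-u,1:] ^ m dvd pderiv r"
proof -
  from assms obtain s where s: "r = [:-u,1:] ^ Suc m * s" by (elim dvdE)
  have "pderiv r = [:-u,1:] ^ m * ([:-u,1:] * pderiv s + smult (of_nat (Suc m)) s * pderiv [:-u,1:])"
    unfolding s pderiv_mult pderiv_power_Suc by (simp add: algebra_simps)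
  then show ?thesis by simp
qed

lemma higher_pderiv_dvd:
  fixes q :: "complex poly"
  assumes "[:-u,1:] ^ k dvd q" "j \<le> k"
  shows "[:-u,1:] ^ (k - j) dvd (pderiv ^^ j) q"
  using assms(2)
proof (induction j)
  case 0 then show ?case using assms(1) by simp
next
  case (Suc j)
  then have "[:-u,1:] ^ Suc (k - Suc j) dvd (pderiv ^^ j) q"
    by (metis Suc_diff_Suc Suc_le_lessD less_imp_le_nat)
  then show ?case by (simp add: pderiv_dvd_aux)
qed

lemma higher_pderiv_root:
  fixes q :: "complex poly"
  assumes "[:-u,1:] ^ k dvd q" "j < k"
  shows "poly ((pderiv ^^ j) q) u = 0"
proof -
  have "[:-u,1:] ^ (k - j) dvd (pderiv ^^ j) q" using assms by (intro higher_pderiv_dvd) auto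
  moreover have "[:-u,1:] dvd [:-u,1:] ^ (k - j)" using assms(2)
    by (metis dvd_power less_imp_neq zero_less_diff)
  ultimately have "[:-u,1:] dvd (pderiv ^^ j) q" by (rule dvd_trans[rotated])
  then show ?thesis by (simp add: poly_eq_0_iff_dvd)
qed

lemma higher_pderiv_at0:
  fixes q :: "complex poly"
  shows "poly ((pderiv ^^ j) q) 0 = fact j * coeff q j"
  by (simp add: poly_0_coeff_0 coeff_higher_pderiv pochhammer_fact)

lemma poch_binom: "pochhammer (of_nat (Suc n) :: complex) j = of_nat (fact j * ((n + j) choose j))"
proof -
  have "pochhammer (1::nat) (n + j) = pochhammer 1 n * pochhammer (1 + of_nat n) j"
    by (rule pochhammer_product')
  then have "fact (n + j) = fact n * pochhammer (Suc n) j"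
    by (simp add: pochhammer_fact)
  moreover have "fact (n + j) = fact n * (fact j * ((n + j) choose j))"
    using binomial_fact_lemma[of j "n + j"] by (simp add: algebra_simps)
  ultimately have "pochhammer (Suc n) j = fact j * ((n + j) choose j)"
    by (metis fact_nonzero mult_left_cancel)
  moreover have "pochhammer (of_nat (Suc n) :: complex) j = of_nat (pochhammer (Suc n) j)"
    by (rule pochhammer_of_nat)
  ultimately show ?thesis by simp
qed

lemma poch_binom': "pochhammer (1 + of_nat n :: complex) j = fact j * of_nat ((n + j) choose j)"
  using poch_binom[of n j] by (simp add: of_nat_mult)

lemma higher_pderiv_value:
  fixes H :: "int poly"
  shows "poly ((pderiv ^^ j) (map_poly of_int H)) (u::complex) =
     fact j * (\<Sum>n\<le>degree H. of_nat ((n + j) choose j) * of_int (coeff H (n + j)) * u ^ n)"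
proof -
  have "degree ((pderiv ^^ j) (map_poly (of_int :: int \<Rightarrow> complex) H)) \<le> degree H"
    using map_poly_degree_leq[of "of_int :: int \<Rightarrow> complex" H] degree_higher_pderiv[of j "map_poly (of_int :: int \<Rightarrow> complex) H"]
    by linarith
  then have "poly ((pderiv ^^ j) (map_poly of_int H)) u =
     (\<Sum>n\<le>degree H. coeff ((pderiv ^^ j) (map_poly of_int H)) n * u ^ n)"
    by (rule poly_sum_bound)
  also have "\<dots> = (\<Sum>n\<le>degree H. fact j * (of_nat ((n + j) choose j) * of_int (coeff H (n + j)) * u ^ n))"
    by (intro sum.cong refl) (simp add: coeff_higher_pderiv poch_binom' coeff_map_poly)
  finally show ?thesis by (simp add: sum_distrib_left)
qed

lemma higher_pderiv_zero_big:
  fixes f :: "complex poly"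
  assumes "m > degree f"
  shows "(pderiv ^^ m) f = 0"
  by (rule poly_eqI) (use assms in \<open>simp add: coeff_higher_pderiv coeff_eq_0\<close>)

lemma pderiv_sum_higher:
  fixes f :: "complex poly"
  assumes "degree f \<le> N"
  shows "pderiv (\<Sum>j\<le>N. (pderiv ^^ j) f) = (\<Sum>j\<le>N. (pderiv ^^ j) f) - f"
proof -
  have "pderiv (\<Sum>j\<le>N. (pderiv ^^ j) f) = (\<Sum>j\<le>N. (pderiv ^^ Suc j) f)"
    using higher_pderiv_sum[of 1 "\<lambda>j. (pderiv ^^ j) f" "{..N}"] by simp
  also have "\<dots> = (\<Sum>j\<le>Suc N. (pderiv ^^ j) f) - f"
    by (subst sum.atMost_Suc_shift) simp
  also have "\<dots> = (\<Sum>j\<le>N. (pderiv ^^ j) f) - f"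
    using higher_pderiv_zero_big[of f "Suc N"] assms by simp
  finally show ?thesis .
qed

lemma lin_fun_diff: "lin (\<lambda>v. \<phi> v - \<psi> v) c = lin \<phi> c - lin \<psi> c"
  by (simp add: lin_def sum_subtractf algebra_simps)

lemma lin_norm_bound:
  assumes "\<And>v. v \<in> Poly_Mapping.keys c \<Longrightarrow> cmod (\<phi> v) \<le> K"
  shows "cmod (lin \<phi> c) \<le> (\<Sum>v\<in>Poly_Mapping.keys c. \<bar>real_of_int (Poly_Mapping.lookup c v)\<bar>) * K"
proof -
  have "cmod (lin \<phi> c) \<le> (\<Sum>v\<in>Poly_Mapping.keys c. cmod (of_int (Poly_Mapping.lookup c v) * \<phi> v))"
    unfolding lin_def by (rule norm_sum)
  also have "\<dots> \<le> (\<Sum>v\<in>Poly_Mapping.keys c. \<bar>real_of_int (Poly_Mapping.lookup c v)\<bar> * K)"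
    by (intro sum_mono) (auto simp: norm_mult intro!: mult_left_mono assms)
  finally show ?thesis by (simp add: sum_distrib_right)
qed

lemma lin_at_zero:
  assumes "\<And>v. v \<in> Poly_Mapping.keys c \<Longrightarrow> v \<noteq> 0 \<Longrightarrow> \<phi> v = 0"
  shows "lin \<phi> c = of_int (Poly_Mapping.lookup c 0) * \<phi> 0"
proof -
  have "lin \<phi> c = lin (\<lambda>v. \<phi> 0 * (if v = 0 then 1 else 0)) c"
    by (intro lin_cong) (use assms in auto)
  then show ?thesis by (simp add: lin_fun_cmult lin_indicator)
qed

lemma poly_int_bound:
  fixes G :: "int poly" and w :: complex
  assumes "cmod w \<le> W"
  shows "cmod (poly (map_poly of_int G) w) \<le> (\<Sum>i\<le>degree G. \<bar>real_of_int (coeff G i)\<bar>) * (1 + W) ^ degree G"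
proof -
  have W0: "W \<ge> 0" using assms norm_ge_zero order_trans by blast
  have "poly (map_poly of_int G) w = (\<Sum>i\<le>degree G. of_int (coeff G i) * w ^ i)"
    using ipoly_poly[of G w] by (simp add: ipoly_def)
  then have "cmod (poly (map_poly of_int G) w) \<le> (\<Sum>i\<le>degree G. cmod (of_int (coeff G i) * w ^ i))"
    by (simp add: norm_sum)
  also have "\<dots> \<le> (\<Sum>i\<le>degree G. \<bar>real_of_int (coeff G i)\<bar> * (1 + W) ^ degree G)"
  proof (intro sum_mono)
    fix i assume i: "i \<in> {..degree G}"
    have "cmod w ^ i \<le> (1 + W) ^ i" using assms by (intro power_mono) auto
    also have "\<dots> \<le> (1 + W) ^ degree G" using i W0 by (intro power_increasing) auto
    finally show "cmod (of_int (coeff G i) * w ^ i) \<le> \<bar>real_of_int (coeff G i)\<bar> * (1 + W) ^ degree G"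
      by (auto simp: norm_mult norm_power intro!: mult_left_mono)
  qed
  finally show ?thesis by (simp add: sum_distrib_right)
qed

definition Hpol :: "int poly \<Rightarrow> nat \<Rightarrow> int poly" where
  "Hpol G p = monom 1 (p - 1) * G ^ p"

definition fpol :: "int \<Rightarrow> int poly \<Rightarrow> nat \<Rightarrow> complex poly" where
  "fpol d G p = smult (1 / fact (p - 1)) (pcompose (map_poly of_int (Hpol G p)) [:0, of_int d:])"

definition Fpol :: "int \<Rightarrow> int poly \<Rightarrow> nat \<Rightarrow> complex poly" where
  "Fpol d G p = (\<Sum>j\<le>degree (Hpol G p) + p. (pderiv ^^ j) (fpol d G p))"

lemma degree_fpol: "degree (fpol d G p) \<le> degree (Hpol G p)"
proof -
  have "degree (fpol d G p) \<le> degree (pcompose (map_poly (of_int :: int \<Rightarrow> complex) (Hpol G p)) [:0, of_int d:])"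
    unfolding fpol_def by (rule degree_smult_le)
  also have "\<dots> \<le> degree (map_poly (of_int :: int \<Rightarrow> complex) (Hpol G p))"
    by (simp add: degree_pcompose)
  also have "\<dots> \<le> degree (Hpol G p)" by (rule map_poly_degree_leq)
  finally show ?thesis .
qed

lemma Fpol_deriv: "pderiv (Fpol d G p) = Fpol d G p - fpol d G p"
  unfolding Fpol_def by (rule pderiv_sum_higher) (use degree_fpol[of d G p] in linarith)

lemma Hc_eq: "map_poly (of_int :: int \<Rightarrow> complex) (Hpol G p) = monom 1 (p - 1) * map_poly of_int G ^ p"
  by (simp add: Hpol_def map_poly_of_int_mult map_poly_of_int_power map_poly_monom)

lemma poly_fpol: "poly (fpol d G p) z = (of_int d * z) ^ (p - 1) * poly (map_poly of_int G) (of_int d * z) ^ p / fact (p - 1)"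
  by (simp add: fpol_def poly_pcompose Hc_eq poly_monom poly_power mult.commute)

lemma fpol_bound:
  fixes R :: real and d :: int and G :: "int poly" and p :: nat and z :: complex
  assumes "cmod z \<le> R" "p \<ge> 1"
  defines "W \<equiv> \<bar>real_of_int d\<bar> * R"
  defines "Bg \<equiv> (\<Sum>i\<le>degree G. \<bar>real_of_int (coeff G i)\<bar>) * (1 + W) ^ degree G"
  shows "cmod (poly (fpol d G p) z) \<le> ((1 + W) * Bg) ^ p / fact (p - 1)"
proof -
  have R0: "R \<ge> 0" using assms norm_ge_zero order_trans by blast
  have W0: "W \<ge> 0" using R0 by (simp add: W_def)
  have dz: "cmod (of_int d * z) \<le> W" unfolding W_def using assms(1)
    by (simp add: norm_mult mult_left_mono)
  have g: "cmod (poly (map_poly of_int G) (of_int d * z)) \<le> Bg"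
    unfolding Bg_def by (rule poly_int_bound[OF dz])
  have "cmod (of_int d * z) ^ (p - 1) \<le> (1 + W) ^ (p - 1)"
    using dz by (intro power_mono) auto
  also have "\<dots> \<le> (1 + W) ^ p" using W0 by (intro power_increasing) auto
  finally have a: "cmod (of_int d * z) ^ (p - 1) \<le> (1 + W) ^ p" .
  have b: "cmod (poly (map_poly of_int G) (of_int d * z)) ^ p \<le> Bg ^ p"
    using g by (intro power_mono) auto
  have "cmod (poly (fpol d G p) z) = cmod (of_int d * z) ^ (p - 1) * cmod (poly (map_poly of_int G) (of_int d * z)) ^ p / fact (p - 1)"
    by (simp add: poly_fpol norm_mult norm_power norm_divide)
  also have "\<dots> \<le> (1 + W) ^ p * Bg ^ p / fact (p - 1)"
    using W0 by (intro divide_right_mono mult_mono a b) auto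
  finally show ?thesis by (simp add: power_mult_distrib)
qed

lemma fpol_deriv_value:
  "poly ((pderiv ^^ j) (fpol d G p)) v =
     of_int d ^ j / fact (p - 1) * poly ((pderiv ^^ j) (map_poly of_int (Hpol G p))) (of_int d * v)"
  by (simp add: fpol_def higher_pderiv_smult higher_pderiv_pcompose_scale poly_pcompose mult.commute)

lemma Fpol_arith:
  fixes \<Theta> :: gr and d :: int and G :: "int poly" and p :: nat
  assumes I: "IntP d \<Theta>" and p1: "p \<ge> 1"
    and Groot: "\<And>v. v \<in> Poly_Mapping.keys \<Theta> \<Longrightarrow> v \<noteq> 0 \<Longrightarrow> poly (map_poly of_int G) (of_int d * v) = (0::complex)"
  shows "\<exists>W::int. lin (poly (Fpol d G p)) \<Theta> =
           of_int (Poly_Mapping.lookup \<Theta> 0 * d ^ (p - 1) * coeff G 0 ^ p + int p * W)"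
proof -
  define N where "N = degree (Hpol G p) + p"
  define Hc :: "complex poly" where "Hc = map_poly of_int (Hpol G p)"
  define L where "L j = lin (\<lambda>v. poly ((pderiv ^^ j) Hc) (of_int d * v)) \<Theta>" for j
  define \<Theta>0 where "\<Theta>0 = Poly_Mapping.lookup \<Theta> 0"
  have linF: "lin (poly (Fpol d G p)) \<Theta> = (\<Sum>j\<le>N. of_int d ^ j / fact (p - 1) * L j)"
    unfolding Fpol_def N_def[symmetric] poly_sum lin_fun_sum fpol_deriv_value L_def Hc_def
    by (intro sum.cong refl) (simp add: lin_fun_cmult[symmetric])
  have coefH: "coeff (Hpol G p) j = (if j = p - 1 then coeff G 0 ^ p else 0)" if "j < p" for j
    using that by (auto simp: Hpol_def coeff_monom_mult coeff_0_power)
  have low: "L j = of_int \<Theta>0 * fact j * of_int (coeff (Hpol G p) j)" if j: "j < p" for j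
  proof -
    have "L j = of_int \<Theta>0 * poly ((pderiv ^^ j) Hc) (of_int d * 0)"
      unfolding L_def \<Theta>0_def
    proof (rule lin_at_zero)
      fix v assume v: "v \<in> Poly_Mapping.keys \<Theta>" "v \<noteq> 0"
      define u where "u = of_int d * v"
      have "poly (map_poly of_int G) u = (0::complex)" using Groot[OF v] by (simp add: u_def)
      then have "[:-u,1:] dvd map_poly of_int G" by (simp add: poly_eq_0_iff_dvd)
      then have "[:-u,1:] ^ p dvd map_poly of_int G ^ p" by (rule dvd_power_same)
      then have "[:-u,1:] ^ p dvd Hc" unfolding Hc_def Hc_eq by (rule dvd_mult)
      then show "poly ((pderiv ^^ j) Hc) (of_int d * v) = 0"
        unfolding u_def[symmetric] using j by (rule higher_pderiv_root)
    qed
    then show ?thesis by (simp add: higher_pderiv_at0 Hc_def coeff_map_poly)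
  qed
  define Z where "Z j = (\<Sum>n\<le>degree (Hpol G p). of_nat ((n + j) choose j) * of_int (coeff (Hpol G p) (n + j)) *
                          lin (\<lambda>v. (of_int d * v) ^ n) \<Theta>)" for j
  have Zint: "Z j \<in> \<int>" for j
    using I unfolding Z_def IntP_def by (intro Ints_sum Ints_mult) auto
  have high: "L j = fact j * Z j" for j
    unfolding L_def Z_def Hc_def higher_pderiv_value
    by (simp add: lin_fun_cmult lin_fun_sum lin_fun_multc mult.assoc)
  have split: "{..N} = {..<p} \<union> {p..N}" by (auto simp: N_def)
  have S1: "(\<Sum>j<p. of_int d ^ j / fact (p - 1) * L j) = of_int (\<Theta>0 * d ^ (p - 1) * coeff G 0 ^ p)"
  proof -
    have "(\<Sum>j<p. of_int d ^ j / fact (p - 1) * L j) =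
          (\<Sum>j<p. if j = p - 1 then (of_int (\<Theta>0 * d ^ (p - 1) * coeff G 0 ^ p) :: complex) else 0)"
      by (intro sum.cong refl) (auto simp: low coefH)
    also have "\<dots> = of_int (\<Theta>0 * d ^ (p - 1) * coeff G 0 ^ p)"
      using p1 by (simp add: sum.delta)
    finally show ?thesis .
  qed
  have S2: "(\<Sum>j\<in>{p..N}. of_int d ^ j / fact (p - 1) * L j) =
            of_nat p * (\<Sum>j\<in>{p..N}. of_int d ^ j * of_nat (fact j div fact p) * Z j)"
    unfolding sum_distrib_left
  proof (intro sum.cong refl)
    fix j assume j: "j \<in> {p..N}"
    have "fact p dvd (fact j :: nat)" using j by (intro fact_dvd) auto
    then have fj: "(fact j :: complex) = of_nat (fact j div fact p) * fact p"
      by (metis dvd_div_mult_self of_nat_fact of_nat_mult)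
    have fp: "(fact p :: complex) = of_nat p * fact (p - 1)"
      using p1 by (metis Suc_diff_1 fact_Suc less_le_trans zero_less_one of_nat_fact of_nat_mult)
    show "of_int d ^ j / fact (p - 1) * L j = of_nat p * (of_int d ^ j * of_nat (fact j div fact p) * Z j)"
      unfolding high fj fp by (simp add: field_simps)
  qed
  have "(\<Sum>j\<in>{p..N}. of_int d ^ j * of_nat (fact j div fact p) * Z j) \<in> \<int>"
    using Zint by (intro Ints_sum Ints_mult) auto
  then obtain W where W: "(\<Sum>j\<in>{p..N}. of_int d ^ j * of_nat (fact j div fact p) * Z j) = of_int W"
    by (elim Ints_cases)
  have "lin (poly (Fpol d G p)) \<Theta> = (\<Sum>j<p. of_int d ^ j / fact (p - 1) * L j) +
          (\<Sum>j\<in>{p..N}. of_int d ^ j / fact (p - 1) * L j)"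
    unfolding linF split by (subst sum.union_disjoint) auto
  also have "\<dots> = of_int (\<Theta>0 * d ^ (p - 1) * coeff G 0 ^ p + int p * W)"
    unfolding S1 S2 W by simp
  finally show ?thesis unfolding \<Theta>0_def by blast
qed

lemma niven:
  fixes \<Theta> :: gr and d :: int and G :: "int poly"
  assumes ev: "lin exp \<Theta> = 0" and t0: "Poly_Mapping.lookup \<Theta> 0 \<noteq> 0" and I: "IntP d \<Theta>"
    and d0: "d \<noteq> 0" and G0: "coeff G 0 \<noteq> 0"
    and Groot: "\<And>v. v \<in> Poly_Mapping.keys \<Theta> \<Longrightarrow> v \<noteq> 0 \<Longrightarrow> poly (map_poly of_int G) (of_int d * v) = (0::complex)"
  shows False
proof -
  define R where "R = (\<Sum>v\<in>Poly_Mapping.keys \<Theta>. cmod v)"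
  have vR: "cmod v \<le> R" if "v \<in> Poly_Mapping.keys \<Theta>" for v
    unfolding R_def using that by (intro member_le_sum) auto
  define W where "W = \<bar>real_of_int d\<bar> * R"
  define Bg where "Bg = (\<Sum>i\<le>degree G. \<bar>real_of_int (coeff G i)\<bar>) * (1 + W) ^ degree G"
  define C where "C = (1 + W) * Bg"
  define S where "S = (\<Sum>v\<in>Poly_Mapping.keys \<Theta>. \<bar>real_of_int (Poly_Mapping.lookup \<Theta> v)\<bar>)"
  define A where "A = S * (exp R * exp R * R)"
  have bound: "cmod (lin (poly (Fpol d G p)) \<Theta>) \<le> A * C ^ p / fact (p - 1)" if p1: "p \<ge> 1" for p
  proof -
    let ?F = "poly (Fpol d G p)"
    have "lin ?F \<Theta> = - lin (\<lambda>v. exp v * ?F 0 - ?F v) \<Theta>"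
      by (simp add: lin_fun_diff lin_fun_multc ev)
    then have "cmod (lin ?F \<Theta>) = cmod (lin (\<lambda>v. exp v * ?F 0 - ?F v) \<Theta>)" by simp
    also have "\<dots> \<le> S * (exp R * exp R * (C ^ p / fact (p - 1)) * R)"
      unfolding S_def
    proof (rule lin_norm_bound)
      fix v assume v: "v \<in> Poly_Mapping.keys \<Theta>"
      show "cmod (exp v * ?F 0 - ?F v) \<le> exp R * exp R * (C ^ p / fact (p - 1)) * R"
      proof (rule hermite_bound[OF Fpol_deriv _ vR[OF v]])
        fix z :: complex assume "cmod z \<le> R"
        then show "cmod (poly (fpol d G p) z) \<le> C ^ p / fact (p - 1)"
          using fpol_bound[of z R p d G] p1 unfolding C_def Bg_def W_def by simp
      qed
    qed
    also have "\<dots> = A * C ^ p / fact (p - 1)" by (simp add: A_def)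
    finally show ?thesis .
  qed
  have "(\<lambda>n. inverse (fact n) * C ^ n) \<longlonglongrightarrow> 0"
    by (rule summable_LIMSEQ_zero[OF summable_exp])
  then have "(\<lambda>n. (A * C) * (inverse (fact n) * C ^ n)) \<longlonglongrightarrow> (A * C) * 0"
    by (intro tendsto_mult tendsto_const)
  then have "(\<lambda>n. (A * C) * (inverse (fact n) * C ^ n)) \<longlonglongrightarrow> 0" by simp
  then have "eventually (\<lambda>n. (A * C) * (inverse (fact n) * C ^ n) < 1) sequentially"
    by (rule order_tendstoD) simp
  then obtain P0 where P0: "\<And>n. n \<ge> P0 \<Longrightarrow> (A * C) * (inverse (fact n) * C ^ n) < 1"
    by (auto simp: eventually_sequentially)
  define \<Theta>0 where "\<Theta>0 = Poly_Mapping.lookup \<Theta> 0"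
  obtain p :: nat where p: "prime p" "p > P0 + nat \<bar>\<Theta>0\<bar> + nat \<bar>d\<bar> + nat \<bar>coeff G 0\<bar>"
    using bigger_prime by blast
  have p1: "p \<ge> 1" using p(1) prime_ge_1_nat by blast
  obtain W' where W': "lin (poly (Fpol d G p)) \<Theta> = of_int (\<Theta>0 * d ^ (p - 1) * coeff G 0 ^ p + int p * W')"
    using Fpol_arith[OF I p1 Groot] unfolding \<Theta>0_def by blast
  define X where "X = \<Theta>0 * d ^ (p - 1) * coeff G 0 ^ p + int p * W'"
  have "cmod (lin (poly (Fpol d G p)) \<Theta>) < 1"
  proof -
    have "A * C ^ p / fact (p - 1) = (A * C) * (inverse (fact (p - 1)) * C ^ (p - 1))"
      using p1 by (cases p) (auto simp: field_simps)
    also have "\<dots> < 1" using P0[of "p - 1"] p by simp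
    finally show ?thesis using bound[OF p1] by linarith
  qed
  then have "cmod (of_int X :: complex) < 1" unfolding W' X_def .
  then have "\<bar>real_of_int X\<bar> < 1" by (metis norm_of_int)
  then have "X = 0" by linarith
  then have "int p dvd \<Theta>0 * d ^ (p - 1) * coeff G 0 ^ p"
    unfolding X_def by (metis add.commute add_eq_0_iff dvd_minus_iff dvd_triv_left)
  moreover have pr: "prime (int p)" using p(1) by simp
  ultimately have "int p dvd \<Theta>0 \<or> int p dvd d \<or> int p dvd coeff G 0"
    using prime_dvd_power[OF pr, of d "p - 1"] prime_dvd_power[OF pr, of "coeff G 0" p]
    by (auto simp: prime_dvd_mult_iff)
  moreover have "\<not> int p dvd x" if "x \<noteq> 0" "nat \<bar>x\<bar> < p" for x
    using dvd_imp_le_int[OF that(1)] that(2) by fastforce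
  ultimately show False using p(2) t0 d0 G0 unfolding \<Theta>0_def by force
qed

lemma map_poly_of_int_prod:
  "map_poly (of_int :: int \<Rightarrow> 'a::comm_ring_1) (\<Prod>v\<in>A. f v) = (\<Prod>v\<in>A. map_poly of_int (f v))"
  by (induction A rule: infinite_finite_induct) (simp_all add: map_poly_of_int_mult)

lemma hermite_lindemann_simple:
  fixes \<alpha> :: complex
  assumes alg: "algebraic \<alpha>" and nz: "\<alpha> \<noteq> 0" and algE: "algebraic (exp \<alpha>)"
  shows False
proof -
  obtain P :: "int poly" where P: "P \<noteq> 0" "coeff P 0 \<noteq> 0" "poly (map_poly of_int P) \<alpha> = 0"
    using algebraicE'_nonzero[OF alg nz] by blast
  define Pc :: "complex poly" where "Pc = map_poly of_int P"
  have Pc0: "Pc \<noteq> 0" using P(1) by (simp add: Pc_def map_poly_eq_0_iff)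
  obtain xs where xs: "Pc = smult (lead_coeff Pc) (\<Prod>x\<leftarrow>xs. [:-x,1:])" "length xs = degree Pc"
    using factor_list by blast
  define d where "d = lead_coeff P"
  have d0: "d \<noteq> 0" using P(1) by (simp add: d_def)
  have lcPc: "lead_coeff Pc = of_int d"
    by (simp add: Pc_def d_def degree_map_poly coeff_map_poly)
  have polyPc: "poly Pc z = of_int d * (\<Prod>x\<leftarrow>xs. z - x)" for z
    by (subst xs(1)) (simp add: lcPc poly_prod_linear)
  have \<alpha>in: "\<alpha> \<in> set xs" using P(3) polyPc[of \<alpha>] d0
    by (auto simp: Pc_def prod_list_zero_iff)
  have nzs: "\<forall>a\<in>set xs. a \<noteq> 0"
  proof
    fix a assume "a \<in> set xs"
    moreover have "poly Pc 0 \<noteq> 0" using P(2) by (simp add: Pc_def poly_0_coeff_0 coeff_map_poly)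
    ultimately show "a \<noteq> 0" using polyPc[of 0] by (auto simp: prod_list_zero_iff)
  qed
  have algs: "\<forall>a\<in>set xs. algebraic a"
  proof
    fix a assume "a \<in> set xs"
    then have "poly Pc a = 0" using polyPc[of a] by (auto simp: prod_list_zero_iff)
    then show "algebraic a" using Pc0 by (intro algebraicI[of Pc]) (auto simp: Pc_def coeff_map_poly)
  qed
  have es: "esym k (map (\<lambda>a. of_int d * a) xs) \<in> \<int>" for k
  proof (cases "k \<le> length xs")
    case True
    show ?thesis
    proof (cases k)
      case 0 then show ?thesis by simp
    next
      case (Suc k')
      have "coeff Pc (length xs - k) = of_int d * ((-1)^k * esym k xs)"
        by (subst xs(1)) (simp add: coeff_prod_linear True lcPc)
      then have "of_int d ^ k * esym k xs = (-1)^k * of_int d ^ k' * coeff Pc (length xs - k)"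
        using Suc by (simp add: algebra_simps)
      moreover have "coeff Pc (length xs - k) \<in> \<int>" by (simp add: Pc_def coeff_map_poly)
      ultimately have "of_int d ^ k * esym k xs \<in> \<int>" by simp
      then show ?thesis by (simp add: esym_scale[of k "of_int d" xs, simplified o_def])
    qed
  next
    case False
    then show ?thesis by (simp add: esym_gt)
  qed
  have ps: "\<And>e. psum e (map (\<lambda>a. of_int d * a) xs) \<in> \<int>"
    by (rule newton_forward[OF subring_like_Ints]) (use es in auto)
  obtain M :: "int poly" where M: "M \<noteq> 0" "poly (map_poly of_int M) (exp \<alpha>) = 0"
    using algebraicE'[OF algE] by blast
  obtain \<Theta> where \<Theta>: "lin exp \<Theta> = 0" "Poly_Mapping.lookup \<Theta> 0 \<noteq> 0" "IntP d \<Theta>" "AK \<Theta>"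
    using construct_Theta[OF M(1) \<alpha>in M(2) nzs algs ps] by blast
  define S0 where "S0 = Poly_Mapping.keys \<Theta> - {0}"
  define g where "g v = (SOME q :: int poly. q \<noteq> 0 \<and> coeff q 0 \<noteq> 0 \<and> poly (map_poly of_int q) (of_int d * v) = (0::complex))" for v
  have g: "coeff (g v) 0 \<noteq> 0 \<and> poly (map_poly of_int (g v)) (of_int d * v) = (0::complex)" if "v \<in> S0" for v
  proof -
    have "algebraic v" using \<Theta>(4) that by (auto simp: AK_def S0_def)
    then have "algebraic (of_int d * v)" by (intro algebraic_mult_complex) auto
    moreover have "of_int d * v \<noteq> 0" using that d0 by (auto simp: S0_def)
    ultimately obtain q :: "int poly" where "q \<noteq> 0" "coeff q 0 \<noteq> 0" "poly (map_poly of_int q) (of_int d * v) = (0::complex)"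
      by (rule algebraicE'_nonzero)
    then have ex: "\<exists>q::int poly. q \<noteq> 0 \<and> coeff q 0 \<noteq> 0 \<and> poly (map_poly of_int q) (of_int d * v) = (0::complex)"
      by blast
    show ?thesis using someI_ex[OF ex] unfolding g_def by blast
  qed
  define G where "G = (\<Prod>v\<in>S0. g v)"
  have finS0: "finite S0" by (simp add: S0_def)
  have G0: "coeff G 0 \<noteq> 0"
    unfolding G_def poly_0_coeff_0[symmetric] poly_prod using g finS0
    by (auto simp: poly_0_coeff_0)
  have Groot: "poly (map_poly of_int G) (of_int d * v) = (0::complex)"
    if "v \<in> Poly_Mapping.keys \<Theta>" "v \<noteq> 0" for v
  proof -
    have v: "v \<in> S0" using that by (simp add: S0_def)
    show ?thesis unfolding G_def map_poly_of_int_prod poly_prod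
      using g[OF v] v finS0 by (auto intro!: prod_zero)
  qed
  show False by (rule niven[OF \<Theta>(1,2,3) d0 G0 Groot])
qed

lemma algebraic_root_of_unity:
  fixes z :: complex
  assumes "z ^ N = 1" "N > 0"
  shows "algebraic z"
proof (rule algebraicI[of "monom 1 N - 1"])
  show "\<And>i. coeff (monom 1 N - 1 :: complex poly) i \<in> \<int>"
    by (auto simp: coeff_monom coeff_1)
  show "(monom 1 N - 1 :: complex poly) \<noteq> 0"
  proof
    assume "(monom 1 N - 1 :: complex poly) = 0"
    then have "coeff (monom 1 N - 1 :: complex poly) N = 0" by simp
    then show False using assms(2) by (simp add: coeff_1)
  qed
  show "poly (monom 1 N - 1) z = 0" using assms(1) by (simp add: poly_monom)
qed

lemma algebraic_sin_rat_pi: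
  fixes y :: real
  assumes "y \<in> \<rat>"
  shows "algebraic (sin (pi * y))"
proof -
  obtain a b where ab: "b > 0" "y = of_int a / of_int b" using Rats_cases'[OF assms] by blast
  define \<zeta> where "\<zeta> = exp (\<i> * of_real (pi * y))"
  define N where "N = nat (2 * b)"
  have N: "N > 0" "of_nat N = (2 * of_int b :: complex)" using ab by (auto simp: N_def)
  have "\<zeta> ^ N = exp (of_nat N * (\<i> * of_real (pi * y)))"
    by (simp add: \<zeta>_def exp_of_nat_mult)
  also have "of_nat N * (\<i> * of_real (pi * y)) = (2 * of_int a * pi) * \<i>"
  proof -
    have "y * of_int b = of_int a" using ab by simp
    then have "complex_of_real (y * of_int b) = complex_of_real (of_int a)" by simp
    then have yb: "of_int b * (of_real y :: complex) = of_int a" by (simp add: mult.commute)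
    have "of_nat N * (\<i> * of_real (pi * y)) = 2 * (of_int b * of_real y) * of_real pi * \<i>"
      by (simp add: N mult_ac)
    then show ?thesis by (simp add: yb)
  qed
  also have "exp \<dots> = 1" by (rule exp_integer_2pi) simp
  finally have z: "algebraic \<zeta>" using N by (intro algebraic_root_of_unity) auto
  have "complex_of_real (sin (pi * y)) = (\<zeta> - inverse \<zeta>) * inverse (2 * \<i>)"
  proof -
    have "complex_of_real (sin (pi * y)) = sin (complex_of_real (pi * y))" by (simp only: sin_of_real)
    also have "\<dots> = (\<zeta> - exp (- (\<i> * complex_of_real (pi * y)))) / (2 * \<i>)"
      unfolding sin_exp_eq \<zeta>_def ..
    also have "exp (- (\<i> * complex_of_real (pi * y))) = inverse \<zeta>"
      unfolding \<zeta>_def by (rule exp_minus)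
    finally show ?thesis by (simp only: divide_inverse)
  qed
  also have "algebraic \<dots>"
  proof -
    have "algebraic (\<zeta> + - inverse \<zeta>)" using z by (intro algebraic_add_complex algebraic_minus algebraic_inverse)
    moreover have "algebraic (2 * \<i>)" by (intro algebraic_mult_complex rat_imp_algebraic algebraic_ii) simp
    ultimately show ?thesis by (simp only: diff_conv_add_uminus algebraic_mult_complex algebraic_inverse)
  qed
  finally show ?thesis by simp
qed

theorem mainTheorem5:
  fixes y :: real
  assumes "y \<in> \<rat>" and "0 < y" and "y < 1"
    and "algebraic (ln (Gamma y) + ln (Gamma (1 - y)))"
  shows "\<not> algebraic (pi * exp 1)"
proof
  assume t: "algebraic (pi * exp 1)"
  define a where "a = ln (Gamma y) + ln (Gamma (1 - y))"
  define s where "s = sin (pi * y)"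
  have s0: "s > 0" unfolding s_def using assms(2,3) by (intro sin_gt_zero) auto
  have s1: "s \<le> 1" by (simp add: s_def)
  have g1: "Gamma y > 0" "Gamma (1 - y) > 0" using assms(2,3) by auto
  have refl: "Gamma y * Gamma (1 - y) = pi / s"
  proof -
    have "(1 - complex_of_real y) = complex_of_real (1 - y)" by simp
    then have e1: "Gamma (1 - complex_of_real y) = complex_of_real (Gamma (1 - y))"
      by (simp only: Gamma_complex_of_real)
    have "complex_of_real (Gamma y * Gamma (1 - y)) = Gamma (of_real y) * Gamma (1 - of_real y)"
      by (simp only: e1 Gamma_complex_of_real of_real_mult)
    also have "\<dots> = of_real pi / sin (of_real pi * of_real y)" by (rule Gamma_reflection_complex)
    also have "\<dots> = complex_of_real (pi / s)" by (simp add: s_def sin_of_real flip: of_real_mult)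
    finally show ?thesis by (simp only: of_real_eq_iff)
  qed
  have ea: "exp a = pi / s" unfolding a_def using g1 by (simp add: exp_add refl)
  have "pi / s \<ge> pi" using s0 s1 pi_gt_zero by (simp add: le_divide_eq)
  then have "exp a > 1" using ea pi_gt3 by linarith
  then have a0: "a > 0" using exp_le_one_iff[of a] by linarith
  have "exp (a + 1) = (pi * exp 1) * inverse s" using s0 unfolding exp_add ea by (simp add: divide_inverse)
  moreover have "algebraic s" unfolding s_def by (rule algebraic_sin_rat_pi[OF assms(1)])
  then have "algebraic ((pi * exp 1) * inverse s)" by (rule algebraic_mult_real[OF t algebraic_inverse])
  ultimately have E: "algebraic (exp (a + 1))" by simp
  have A: "algebraic (a + 1)" using assms(4) unfolding a_def[symmetric]
    by (intro algebraic_add_real[OF _ rat_imp_algebraic]) auto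
  show False
  proof (rule hermite_lindemann_simple[of "complex_of_real (a + 1)"])
    show "algebraic (complex_of_real (a + 1))" using A by (simp only: algebraic_of_real_iff)
    show "complex_of_real (a + 1) \<noteq> 0" using a0 by (simp only: of_real_eq_0_iff)
    show "algebraic (exp (complex_of_real (a + 1)))" using E by (simp only: exp_of_real algebraic_of_real_iff)
  qed
qed

end
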